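(* Let $(X,\mathcal{F})$ be the game hypergraph constructed from a 3SAT formula $\varphi$ as described in the context, and consider the strict Avoider-Enforcer game on it in which Enforcer moves first. Consider the restricted game in which both players may only make moves respecting the following order within every box $i$: $a_i$ is claimed before both $x_i$ and $\overline{x_i}$, and $s_i$ is claimed after both $x_i$ and $\overline{x_i}$ (i.e. $x_i$ and $\overline{x_i}$ may only be claimed once $a_i$ is claimed, and $s_i$ only once $x_i$ and $\overline{x_i}$ are claimed). Then Avoider has a winning strategy in the restricted game if and only if she has a winning strategy in the unrestricted game; that is, the outcome of the game is unchanged.
   Context: A (strict) Avoider-Enforcer game is given by a finite board $X$ and a family $\mathcal{F}$ of losing sets; Avoider and Enforcer alternately claim one unclaimed element of $X$ per move until all of $X$ is claimed; Enforcer wins iff Avoider has claimed all elements of some $f\in\mathcal{F}$. Construction from a 3SAT formula $\varphi$ on variables $x_1,\dots,x_n$ (each clause having exactly three literals on three distinct variables): the board is $X=\bigcup_{i=1}^n\{a_i,s_i,x_i,\overline{x_i}\}$, consisting of $4n$ distinct vertices; the set $B_i=\{a_i,s_i,x_i,\overline{x_i}\}$ is called box $i$. The vertices $x_i,\overline{x_i}$ are identified with the literals $x_i,\overline{x_i}$ of $\varphi$. The family $\mathcal{F}$ consists of (1) for each $i$, all four 3-element subsets of $B_i$; and (2) for each clause $C=\ell_i\lor\ell_j\lor\ell_k$ of $\varphi$, where $\ell_h\in\{x_h,\overline{x_h}\}$ for $h=i,j,k$, the set $L_C=\{s_i,s_j,s_k,\overline{\ell_i},\overline{\ell_j},\overline{\ell_k}\}$,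 where $\overline{\ell}$ denotes the negation of literal $\ell$ (with $\overline{\overline{x_h}}=x_h$). *)

theory Defs
  imports Main
begin

text \<open>A position is given by the set Av of elements claimed by Avoider, the set En of
elements claimed by Enforcer, and a flag telling whose turn it is (True = Avoider).
Since the board is finite, the least fixed point below characterises exactly the
positions from which Avoider has a winning strategy.\<close>

inductive avoider_wins ::
  "('v set \<Rightarrow> 'v \<Rightarrow> bool) \<Rightarrow> 'v set \<Rightarrow> 'v set set \<Rightarrow> 'v set \<Rightarrow> 'v set \<Rightarrow> bool \<Rightarrow> bool"
  for legal :: "'v set \<Rightarrow> 'v \<Rightarrow> bool" and X :: "'v set" and F :: "'v set set"
where
  terminal: "\<not> (\<exists>v\<in>X - (Av \<union> En). legal (Av \<union> En) v) \<Longrightarrow> \<not> (\<exists>f\<in>F. f \<subseteq> Av)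
      \<Longrightarrow> avoider_wins legal X F Av En t"
| avoider_move: "v \<in> X - (Av \<union> En) \<Longrightarrow> legal (Av \<union> En) v
      \<Longrightarrow> avoider_wins legal X F (insert v Av) En False
      \<Longrightarrow> avoider_wins legal X F Av En True"
| enforcer_move: "\<exists>v\<in>X - (Av \<union> En). legal (Av \<union> En) v
      \<Longrightarrow> (\<forall>v\<in>X - (Av \<union> En). legal (Av \<union> En) v \<longrightarrow> avoider_wins legal X F Av (insert v En) True)
      \<Longrightarrow> avoider_wins legal X F Av En False"

definition avoider_wins_enforcer_first :: "('v set \<Rightarrow> 'v \<Rightarrow> bool) \<Rightarrow> 'v set \<Rightarrow> 'v set set \<Rightarrow> bool" where
  "avoider_wins_enforcer_first legal X F \<longleftrightarrow> avoider_wins legal X F {} {} False"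

definition unrestricted :: "'v set \<Rightarrow> 'v \<Rightarrow> bool" where
  "unrestricted C v \<longleftrightarrow> True"

text \<open>Variables are x_0, ..., x_(n-1). A literal is a pair (i, b): (i, True) is x_i,
(i, False) is its negation. A clause is a triple of literals on three distinct variables.\<close>

type_synonym literal = "nat \<times> bool"
type_synonym clause = "literal \<times> literal \<times> literal"

datatype vtx = A nat | S nat | Pos nat | Neg nat

definition wf_3sat :: "nat \<Rightarrow> clause list \<Rightarrow> bool" where
  "wf_3sat n phi \<longleftrightarrow> (\<forall>((i,bi),(j,bj),(k,bk)) \<in> set phi.
      i < n \<and> j < n \<and> k < n \<and> i \<noteq> j \<and> i \<noteq> k \<and> j \<noteq> k)"

fun lit_vtx :: "literal \<Rightarrow> vtx" where
  "lit_vtx (i, b) = (if b then Pos i else Neg i)"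

fun neg_lit :: "literal \<Rightarrow> literal" where
  "neg_lit (i, b) = (i, \<not> b)"

definition box :: "nat \<Rightarrow> vtx set" where
  "box i = {A i, S i, Pos i, Neg i}"

definition board :: "nat \<Rightarrow> vtx set" where
  "board n = (\<Union>i<n. box i)"

fun clause_set :: "clause \<Rightarrow> vtx set" where
  "clause_set ((i,bi),(j,bj),(k,bk)) =
     {S i, S j, S k, lit_vtx (neg_lit (i,bi)), lit_vtx (neg_lit (j,bj)), lit_vtx (neg_lit (k,bk))}"

definition losing_sets :: "nat \<Rightarrow> clause list \<Rightarrow> vtx set set" where
  "losing_sets n phi =
     (\<Union>i<n. {B. B \<subseteq> box i \<and> card B = 3}) \<union> clause_set ` set phi"

definition restricted :: "vtx set \<Rightarrow> vtx \<Rightarrow> bool" where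
  "restricted C v \<longleftrightarrow>
     (\<forall>i. (v = Pos i \<or> v = Neg i) \<longrightarrow> A i \<in> C) \<and>
     (\<forall>i. v = S i \<longrightarrow> Pos i \<in> C \<and> Neg i \<in> C)"

end

theory Submission
  imports Defs
begin


fun idx :: "vtx \<Rightarrow> nat" where
  "idx (A i) = i" | "idx (S i) = i" | "idx (Pos i) = i" | "idx (Neg i) = i"

lemma in_box: "v \<in> box i \<longleftrightarrow> idx v = i"
  by (cases v) (auto simp: box_def)

lemma in_board: "v \<in> board n \<longleftrightarrow> idx v < n"
  by (auto simp: board_def in_box)

lemma finite_box: "finite (box i)" by (simp add: box_def)
lemma finite_board: "finite (board n)" by (simp add: board_def finite_box)
lemma card_box: "card (box i) = 4" by (simp add: box_def)

lemma restricted_mono: "restricted C v \<Longrightarrow> C \<subseteq> D \<Longrightarrow> restricted D v"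
  unfolding restricted_def by blast

lemma restricted_exists:
  assumes "v \<in> board n - C" shows "\<exists>w\<in>board n - C. restricted C w"
proof -
  let ?i = "idx v"
  have i: "?i < n" using assms by (simp add: in_board)
  show ?thesis
  proof (cases "A ?i \<in> C")
    case False thus ?thesis using i by (intro bexI[of _ "A ?i"]) (auto simp: restricted_def in_board)
  next
    case a: True
    show ?thesis
    proof (cases "Pos ?i \<in> C")
      case False thus ?thesis using i a by (intro bexI[of _ "Pos ?i"]) (auto simp: restricted_def in_board)
    next
      case p: True
      show ?thesis
      proof (cases "Neg ?i \<in> C")
        case False thus ?thesis using i a by (intro bexI[of _ "Neg ?i"]) (auto simp: restricted_def in_board)
      next
        case q: True
        have "v = S ?i" using assms a p q by (cases v) auto
        thus ?thesis using assms p q by (intro bexI[of _ "S ?i"]) (auto simp: restricted_def)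
      qed
    qed
  qed
qed

fun clause_sat :: "(nat \<Rightarrow> bool) \<Rightarrow> clause \<Rightarrow> bool" where
  "clause_sat \<sigma> ((i,bi),(j,bj),(k,bk)) = (\<sigma> i = bi \<or> \<sigma> j = bj \<or> \<sigma> k = bk)"

section \<open>Avoider side\<close>

fun partner :: "(nat \<Rightarrow> bool) \<Rightarrow> vtx \<Rightarrow> vtx" where
  "partner \<sigma> (A i) = (if \<sigma> i then Pos i else Neg i)"
| "partner \<sigma> (S i) = (if \<sigma> i then Neg i else Pos i)"
| "partner \<sigma> (Pos i) = (if \<sigma> i then A i else S i)"
| "partner \<sigma> (Neg i) = (if \<sigma> i then S i else A i)"

lemma partner_partner[simp]: "partner \<sigma> (partner \<sigma> v) = v"
  by (cases v) auto
lemma partner_neq: "partner \<sigma> v \<noteq> v"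
  by (cases v) auto
lemma idx_partner[simp]: "idx (partner \<sigma> v) = idx v"
  by (cases v) auto

definition IA :: "(nat \<Rightarrow> bool) \<Rightarrow> nat \<Rightarrow> vtx set \<Rightarrow> vtx set \<Rightarrow> bool" where
  "IA \<sigma> n Av En \<longleftrightarrow> Av \<union> En \<subseteq> board n \<and> Av \<inter> En = {} \<and>
     (\<forall>v. v \<in> Av \<longrightarrow> partner \<sigma> v \<in> En) \<and> (\<forall>v. v \<in> En \<longrightarrow> partner \<sigma> v \<in> Av)"

lemma IA_closed: "IA \<sigma> n Av En \<Longrightarrow> v \<in> Av \<union> En \<Longrightarrow> partner \<sigma> v \<in> Av \<union> En"
  unfolding IA_def by blast

lemma partner_legal:
  assumes "IA \<sigma> n Av En" "legal = restricted \<or> legal = unrestricted"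
    "v \<notin> Av \<union> En" "legal (Av \<union> En) v"
  shows "legal (insert v (Av \<union> En)) (partner \<sigma> v)"
  using assms(2)
proof
  assume L: "legal = unrestricted" thus ?thesis by (simp add: unrestricted_def)
next
  assume L: "legal = restricted"
  let ?C = "Av \<union> En"
  have cl: "\<And>x. x \<in> ?C \<Longrightarrow> partner \<sigma> x \<in> ?C" using IA_closed[OF assms(1)] by blast
  have r: "restricted ?C v" using assms(4) L by simp
  have "restricted (insert v ?C) (partner \<sigma> v)"
  proof (cases v)
    case (A i) thus ?thesis by (auto simp: restricted_def)
  next
    case (S i)
    with r have "Pos i \<in> ?C" "Neg i \<in> ?C" by (auto simp: restricted_def)
    hence "partner \<sigma> v \<in> ?C" using S by auto
    hence "v \<in> ?C" using cl[of "partner \<sigma> v"] by simp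
    with assms(3) show ?thesis by simp
  next
    case (Pos i)
    with r have a: "A i \<in> ?C" by (auto simp: restricted_def)
    show ?thesis
    proof (cases "\<sigma> i")
      case True
      with cl[OF a] Pos assms(3) show ?thesis by simp
    next
      case False
      with cl[OF a] Pos show ?thesis by (auto simp: restricted_def)
    qed
  next
    case (Neg i)
    with r have a: "A i \<in> ?C" by (auto simp: restricted_def)
    show ?thesis
    proof (cases "\<sigma> i")
      case False
      with cl[OF a] Neg assms(3) show ?thesis by simp
    next
      case True
      with cl[OF a] Neg show ?thesis by (auto simp: restricted_def)
    qed
  qed
  thus ?thesis using L by simp
qed

lemma IA_final:
  assumes "IA \<sigma> n Av En" "\<forall>c\<in>set phi. clause_sat \<sigma> c"
  shows "\<not> (\<exists>f\<in>losing_sets n phi. f \<subseteq> Av)"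
proof
  assume "\<exists>f\<in>losing_sets n phi. f \<subseteq> Av"
  then obtain f where f: "f \<in> losing_sets n phi" "f \<subseteq> Av" by blast
  have nb: "\<And>x. x \<in> Av \<Longrightarrow> partner \<sigma> x \<notin> Av" using assms(1) unfolding IA_def by blast
  show False
  proof (cases "f \<in> clause_set ` set phi")
    case True
    then obtain c where c: "c \<in> set phi" "f = clause_set c" by blast
    obtain i bi j bj k bk where cc: "c = ((i,bi),(j,bj),(k,bk))" by (metis prod.exhaust)
    have "clause_sat \<sigma> c" using assms(2) c by blast
    hence "(\<sigma> i = bi \<and> S i \<in> f \<and> partner \<sigma> (S i) \<in> f) \<or> (\<sigma> j = bj \<and> S j \<in> f \<and> partner \<sigma> (S j) \<in> f)
        \<or> (\<sigma> k = bk \<and> S k \<in> f \<and> partner \<sigma> (S k) \<in> f)"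
      using c cc by auto
    thus False using nb f(2) by blast
  next
    case False
    then obtain i B where B: "f = B" "B \<subseteq> box i" "card B = 3" using f(1)
      unfolding losing_sets_def by blast
    define u where "u = (if A i \<in> Av then A i else partner \<sigma> (A i))"
    define w where "w = (if S i \<in> Av then S i else partner \<sigma> (S i))"
    have "Av \<inter> box i \<subseteq> {u, w}"
    proof
      fix x assume x: "x \<in> Av \<inter> box i"
      hence "x = A i \<or> x = S i \<or> x = Pos i \<or> x = Neg i" by (auto simp: box_def)
      thus "x \<in> {u,w}" using x nb[of x] unfolding u_def w_def
        by (cases "\<sigma> i") auto
    qed
    hence "B \<subseteq> {u,w}" using B f(2) by blast
    hence "card B \<le> card {u,w}" by (intro card_mono) auto
    also have "\<dots> \<le> 2" by (simp add: card_insert_le_m1)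
    finally show False using B by simp
  qed
qed

lemma avoider_side:
  assumes L: "legal = restricted \<or> legal = unrestricted"
    and sat: "\<forall>c\<in>set phi. clause_sat \<sigma> c"
  shows "IA \<sigma> n Av En \<Longrightarrow> avoider_wins legal (board n) (losing_sets n phi) Av En False"
proof (induction "card (board n - (Av \<union> En))" arbitrary: Av En rule: less_induct)
  case less
  let ?C = "Av \<union> En"
  have H1: "\<And>C v. restricted C v \<Longrightarrow> legal C v" using L by (auto simp: unrestricted_def)
  show ?case
  proof (cases "\<exists>v\<in>board n - ?C. legal ?C v")
    case False
    have nf: "\<not> (\<exists>f\<in>losing_sets n phi. f \<subseteq> Av)" by (rule IA_final[OF less.prems sat])
    show ?thesis
      by (rule avoider_wins.terminal) (rule False, rule nf)
  next
    case True
    show ?thesis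
    proof (rule avoider_wins.enforcer_move[where Av=Av and En=En], fact True, intro ballI impI)
      fix v assume v: "v \<in> board n - ?C" and lv: "legal ?C v"
      let ?p = "partner \<sigma> v"
      have pC: "?p \<notin> ?C" using IA_closed[OF less.prems, of ?p] v by auto
      have pb: "?p \<in> board n" using v by (simp add: in_board)
      have pv: "?p \<noteq> v" by (rule partner_neq)
      have lp: "legal (Av \<union> insert v En) ?p"
        using partner_legal[OF less.prems L _ lv] v by simp
      have IA': "IA \<sigma> n (insert ?p Av) (insert v En)"
        using less.prems v pb pC pv unfolding IA_def by auto
      have lt: "card (board n - (insert ?p Av \<union> insert v En)) < card (board n - ?C)"
      proof -
        have "board n - (insert ?p Av \<union> insert v En) \<subset> board n - ?C" using v by auto
        thus ?thesis by (intro psubset_card_mono) (auto simp: finite_board)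
      qed
      show "avoider_wins legal (board n) (losing_sets n phi) Av (insert v En) True"
        by (rule avoider_wins.avoider_move[of ?p]) (use pb pC pv lp less.hyps[OF lt IA'] in auto)
    qed
  qed
qed

section \<open>Enforcer side\<close>

definition Wf :: "nat \<Rightarrow> vtx set \<Rightarrow> vtx set \<Rightarrow> bool" where
  "Wf n Av En \<longleftrightarrow> Av \<union> En \<subseteq> board n \<and> Av \<inter> En = {}"

definition good :: "vtx set \<Rightarrow> vtx set \<Rightarrow> nat \<Rightarrow> bool" where
  "good Av En i \<longleftrightarrow> A i \<in> En \<and> S i \<in> Av \<and> (Pos i \<in> Av \<or> Neg i \<in> Av)"

definition clean :: "vtx set \<Rightarrow> vtx set \<Rightarrow> nat \<Rightarrow> bool" where
  "clean Av En j \<longleftrightarrow> (box j \<subseteq> Av \<union> En \<and> good Av En j) \<or> box j \<inter> (Av \<union> En) = {}"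

definition restc :: "nat \<Rightarrow> vtx set \<Rightarrow> vtx set \<Rightarrow> nat \<Rightarrow> bool" where
  "restc n Av En i \<longleftrightarrow> (\<forall>j<n. j \<noteq> i \<longrightarrow> clean Av En j)"

lemma clean_insA: "idx v \<noteq> j \<Longrightarrow> clean Av En j \<Longrightarrow> clean (insert v Av) En j"
  unfolding clean_def good_def by (auto simp: in_box)
lemma clean_insE: "idx v \<noteq> j \<Longrightarrow> clean Av En j \<Longrightarrow> clean Av (insert v En) j"
  unfolding clean_def good_def by (auto simp: in_box)
lemma restc_insA: "idx v = i \<Longrightarrow> restc n Av En i \<Longrightarrow> restc n (insert v Av) En i"
  unfolding restc_def by (auto intro!: clean_insA)
lemma restc_insE: "idx v = i \<Longrightarrow> restc n Av En i \<Longrightarrow> restc n Av (insert v En) i"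
  unfolding restc_def by (auto intro!: clean_insE)

definition SP where "SP n Av En \<longleftrightarrow> Wf n Av En \<and> card En = card Av \<and> (\<forall>j<n. clean Av En j)"
definition SQ1 where "SQ1 n Av En i \<longleftrightarrow> i < n \<and> Wf n Av En \<and> card En = Suc (card Av) \<and> restc n Av En i
   \<and> box i \<inter> (Av \<union> En) = {A i} \<and> A i \<in> En"
definition SR1 where "SR1 n Av En i w \<longleftrightarrow> i < n \<and> Wf n Av En \<and> card En = card Av \<and> restc n Av En i
   \<and> A i \<in> En \<and> w \<in> Av \<and> idx w = i \<and> w \<noteq> A i \<and> box i \<inter> (Av \<union> En) = {A i, w}"
definition SQ2 where "SQ2 n Av En i c \<longleftrightarrow> i < n \<and> Wf n Av En \<and> card En = Suc (card Av) \<and> restc n Av En i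
   \<and> box i - (Av \<union> En) = {c} \<and> good (insert c Av) En i \<and> restricted (Av \<union> En) c \<and> 2 \<le> card (En \<inter> box i)"
definition SR3 where "SR3 n Av En i \<longleftrightarrow> i < n \<and> Wf n Av En \<and> card En = card Av
   \<and> box i \<inter> (Av \<union> En) = {A i} \<and> A i \<in> En"
definition SQ3 where "SQ3 n Av En i \<longleftrightarrow> i < n \<and> Wf n Av En \<and> card En = Suc (card Av)
   \<and> box i \<inter> (Av \<union> En) = {A i, Pos i} \<and> A i \<in> En \<and> Pos i \<in> En"
definition SR2 where "SR2 n Av En i c \<longleftrightarrow> i < n \<and> Wf n Av En \<and> card En = card Av
   \<and> idx c = i \<and> c \<notin> Av \<union> En \<and> restricted (Av \<union> En) c \<and> 2 \<le> card (En \<inter> box i)"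
definition SD where "SD n Av En t \<longleftrightarrow> Wf n Av En \<and> card En = (if t then Suc (card Av) else card Av)
   \<and> (\<exists>i<n. 3 \<le> card (En \<inter> box i))"

definition EInv where "EInv n Av En t \<longleftrightarrow>
   (\<not> t \<and> (SP n Av En \<or> (\<exists>i w. SR1 n Av En i w) \<or> (\<exists>i. SR3 n Av En i) \<or> (\<exists>i c. SR2 n Av En i c)))
 \<or> (t \<and> ((\<exists>i. SQ1 n Av En i) \<or> (\<exists>i c. SQ2 n Av En i c) \<or> (\<exists>i. SQ3 n Av En i)))
 \<or> SD n Av En t"

lemma finite_sets: "Wf n Av En \<Longrightarrow> finite Av \<and> finite En"
  unfolding Wf_def using finite_board finite_subset by blast

lemma Wf_insA: "Wf n Av En \<Longrightarrow> v \<in> board n - (Av \<union> En) \<Longrightarrow> Wf n (insert v Av) En \<and> card (insert v Av) = Suc (card Av)"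
  using finite_sets[of n Av En] unfolding Wf_def by auto
lemma Wf_insE: "Wf n Av En \<Longrightarrow> v \<in> board n - (Av \<union> En) \<Longrightarrow> Wf n Av (insert v En) \<and> card (insert v En) = Suc (card En)"
  using finite_sets[of n Av En] unfolding Wf_def by auto


lemma EInv_Wf: "EInv n Av En t \<Longrightarrow> Wf n Av En"
  unfolding EInv_def SP_def SR1_def SR2_def SR3_def SQ1_def SQ2_def SQ3_def SD_def by auto

lemma A_step:
  assumes "EInv n Av En True" "v \<in> board n - (Av \<union> En)"
  shows "EInv n (insert v Av) En False"
proof -
  have W: "Wf n (insert v Av) En" "card (insert v Av) = Suc (card Av)"
    using Wf_insA[OF EInv_Wf[OF assms(1)] assms(2)] by blast+
  have vC: "v \<notin> Av \<union> En" using assms(2) by blast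
  consider (q1) i where "SQ1 n Av En i" | (q2) i c where "SQ2 n Av En i c" | (q3) i where "SQ3 n Av En i"
    | (d) "SD n Av En True" using assms(1) unfolding EInv_def by blast
  thus ?thesis
  proof cases
    case q1
    show ?thesis
    proof (cases "idx v = i")
      case True
      have vb: "v \<in> box i" using True by (simp add: in_box)
      have bx: "box i \<inter> (insert v Av \<union> En) = {A i, v}" using q1 vb unfolding SQ1_def by blast
      have va: "v \<noteq> A i" using q1 vC unfolding SQ1_def by blast
      have "SR1 n (insert v Av) En i v"
        unfolding SR1_def using q1 W True bx va restc_insA[OF True] unfolding SQ1_def by simp
      thus ?thesis unfolding EInv_def by blast
    next
      case False
      have "SR3 n (insert v Av) En i"
        using q1 W False vC unfolding SR3_def SQ1_def by (auto simp: in_box)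
      thus ?thesis unfolding EInv_def by blast
    qed
  next
    case q2
    show ?thesis
    proof (cases "v = c")
      case True
      have ic: "idx c = i" using q2 unfolding SQ2_def by (auto simp: in_box)
      have "\<forall>j<n. clean (insert v Av) En j"
      proof (intro allI impI)
        fix j assume j: "j < n"
        show "clean (insert v Av) En j"
        proof (cases "j = i")
          case True
          thus ?thesis using q2 \<open>v = c\<close> unfolding SQ2_def clean_def by auto
        next
          case False
          thus ?thesis using q2 j restc_insA[of v i n Av En] ic \<open>v = c\<close>
            unfolding SQ2_def restc_def by auto
        qed
      qed
      hence "SP n (insert v Av) En" using W q2 unfolding SP_def SQ2_def by auto
      thus ?thesis unfolding EInv_def by blast
    next
      case False
      have cb: "c \<in> box i - (Av \<union> En)" using q2 unfolding SQ2_def by blast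
      hence ic: "idx c = i" by (simp add: in_box)
      have cC: "c \<notin> insert v Av \<union> En" using cb False by blast
      have rc: "restricted (insert v Av \<union> En) c"
        using q2 restricted_mono[of "Av \<union> En" c "insert v Av \<union> En"] unfolding SQ2_def by blast
      have "SR2 n (insert v Av) En i c"
        unfolding SR2_def using q2 W ic cC rc unfolding SQ2_def by simp
      thus ?thesis unfolding EInv_def by blast
    qed
  next
    case q3
    define c where "c = (if v = Neg i then S i else Neg i)"
    have sub: "{A i, Pos i} \<subseteq> En \<inter> box i" using q3 unfolding SQ3_def by (auto simp: box_def)
    have "card {A i, Pos i} \<le> card (En \<inter> box i)"
      by (rule card_mono[OF _ sub]) (simp add: finite_box)
    hence c2: "2 \<le> card (En \<inter> box i)" by simp
    have cC: "c \<notin> insert v Av \<union> En" using q3 unfolding SQ3_def c_def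
      by (auto simp: box_def)
    have rc: "restricted (insert v Av \<union> En) c" using q3 unfolding SQ3_def c_def restricted_def
      by auto
    have "SR2 n (insert v Av) En i c"
      using q3 W cC rc c2 unfolding SR2_def SQ3_def by (auto simp: c_def)
    thus ?thesis unfolding EInv_def by blast
  next
    case d
    have "SD n (insert v Av) En False" using d W unfolding SD_def by auto
    thus ?thesis unfolding EInv_def by blast
  qed
qed



lemma E_step:
  assumes "EInv n Av En False" "\<not> board n \<subseteq> Av \<union> En"
  shows "\<exists>v\<in>board n - (Av \<union> En). restricted (Av \<union> En) v \<and> EInv n Av (insert v En) True"
proof -
  have Wf0: "Wf n Av En" by (rule EInv_Wf[OF assms(1)])
  consider (p) "SP n Av En" | (r1) i w where "SR1 n Av En i w" | (r3) i where "SR3 n Av En i"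
    | (r2) i c where "SR2 n Av En i c" | (d) "SD n Av En False" using assms(1) unfolding EInv_def by blast
  thus ?thesis
  proof cases
    case p
    obtain x where x: "x \<in> board n" "x \<notin> Av \<union> En" using assms(2) by blast
    define j where "j = idx x"
    have j: "j < n" using x by (simp add: in_board j_def)
    have "\<not> box j \<subseteq> Av \<union> En" using x by (auto simp: j_def in_box)
    hence e: "box j \<inter> (Av \<union> En) = {}" using p j unfolding SP_def clean_def by blast
    have ab: "A j \<in> board n" using j by (simp add: in_board)
    have aC: "A j \<notin> Av \<union> En" using e by (auto simp: box_def)
    have W: "Wf n Av (insert (A j) En)" "card (insert (A j) En) = Suc (card En)"
      using Wf_insE[OF Wf0, of "A j"] ab aC by blast+
    have rc: "restc n Av (insert (A j) En) j"
      using p restc_insE[of "A j" j n Av En] unfolding SP_def restc_def by simp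
    have bx: "box j \<inter> (Av \<union> insert (A j) En) = {A j}" using e by (auto simp: box_def)
    have "SQ1 n Av (insert (A j) En) j" unfolding SQ1_def using j W rc bx p unfolding SP_def by simp
    moreover have "restricted (Av \<union> En) (A j)" by (simp add: restricted_def)
    ultimately show ?thesis using ab aC unfolding EInv_def by blast
  next
    case r1
    define r where "r = (if w = Pos i then Neg i else Pos i)"
    define c where "c = (if w = S i then Neg i else S i)"
    have i: "i < n" and bx: "box i \<inter> (Av \<union> En) = {A i, w}" and wi: "idx w = i" and wa: "w \<noteq> A i"
      and aE: "A i \<in> En" and wA: "w \<in> Av" using r1 unfolding SR1_def by blast+
    have wc: "w = S i \<or> w = Pos i \<or> w = Neg i" using wi wa by (cases w) auto
    have rb: "r \<in> box i" "c \<in> box i" by (auto simp: r_def c_def box_def)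
    have rne: "r \<noteq> A i" "r \<noteq> w" using wc unfolding r_def by auto
    have rC: "r \<notin> Av \<union> En" using bx rb(1) rne by blast
    have rB: "r \<in> board n" using i by (simp add: r_def in_board)
    have W: "Wf n Av (insert r En)" "card (insert r En) = Suc (card En)"
      using Wf_insE[OF Wf0, of r] rB rC by blast+
    have rc: "restc n Av (insert r En) i"
      using r1 restc_insE[of r i n Av En] unfolding SR1_def by (simp add: r_def)
    have bx2: "box i - (Av \<union> insert r En) = {c}"
      using bx wc unfolding r_def c_def by (auto simp: box_def)
    have gd: "good (insert c Av) (insert r En) i"
      using aE wA wc unfolding good_def r_def c_def by auto
    have rcc: "restricted (Av \<union> insert r En) c"
      using aE wA wc unfolding restricted_def r_def c_def by auto
    have sub: "{A i, r} \<subseteq> insert r En \<inter> box i" using aE rb by (auto simp: box_def)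
    have "card {A i, r} \<le> card (insert r En \<inter> box i)"
      by (rule card_mono[OF _ sub]) (simp add: finite_box)
    hence c2: "2 \<le> card (insert r En \<inter> box i)" by (simp add: r_def)
    have "SQ2 n Av (insert r En) i c" unfolding SQ2_def
      using i W rc bx2 gd rcc c2 r1 unfolding SR1_def by simp
    moreover have "restricted (Av \<union> En) r" using aE by (auto simp: restricted_def r_def)
    ultimately show ?thesis using rB rC unfolding EInv_def by blast
  next
    case r3
    have i: "i < n" and bx: "box i \<inter> (Av \<union> En) = {A i}" and aE: "A i \<in> En"
      using r3 unfolding SR3_def by blast+
    have pC: "Pos i \<notin> Av \<union> En" using bx by (auto simp: box_def)
    have pB: "Pos i \<in> board n" using i by (simp add: in_board)
    have W: "Wf n Av (insert (Pos i) En)" "card (insert (Pos i) En) = Suc (card En)"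
      using Wf_insE[OF Wf0, of "Pos i"] pB pC by blast+
    have bx2: "box i \<inter> (Av \<union> insert (Pos i) En) = {A i, Pos i}" using bx by (auto simp: box_def)
    have "SQ3 n Av (insert (Pos i) En) i" unfolding SQ3_def
      using i W bx2 aE r3 unfolding SR3_def by simp
    moreover have "restricted (Av \<union> En) (Pos i)" using aE by (auto simp: restricted_def)
    ultimately show ?thesis using pB pC unfolding EInv_def by blast
  next
    case r2
    have i: "i < n" and ci: "idx c = i" and cC: "c \<notin> Av \<union> En" and rc: "restricted (Av \<union> En) c"
      and c2: "2 \<le> card (En \<inter> box i)" using r2 unfolding SR2_def by blast+
    have cB: "c \<in> board n" using i ci by (simp add: in_board)
    have W: "Wf n Av (insert c En)" "card (insert c En) = Suc (card En)"
      using Wf_insE[OF Wf0, of c] cB cC by blast+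
    have "insert c En \<inter> box i = insert c (En \<inter> box i)" using ci by (auto simp: in_box)
    moreover have "finite (En \<inter> box i)" by (simp add: finite_box)
    ultimately have "card (insert c En \<inter> box i) = Suc (card (En \<inter> box i))" using cC by simp
    hence "3 \<le> card (insert c En \<inter> box i)" using c2 by simp
    hence "SD n Av (insert c En) True" unfolding SD_def using W i r2 unfolding SR2_def by auto
    thus ?thesis using cB cC rc unfolding EInv_def by blast
  next
    case d
    obtain x where x: "x \<in> board n - (Av \<union> En)" using assms(2) by blast
    obtain v where v: "v \<in> board n - (Av \<union> En)" "restricted (Av \<union> En) v"
      using restricted_exists[OF x] by blast
    have W: "Wf n Av (insert v En)" "card (insert v En) = Suc (card En)"
      using Wf_insE[OF Wf0 v(1)] by blast+
    obtain i where i: "i < n" "3 \<le> card (En \<inter> box i)" using d unfolding SD_def by blast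
    have "card (En \<inter> box i) \<le> card (insert v En \<inter> box i)"
      by (rule card_mono) (auto simp: finite_box)
    hence "SD n Av (insert v En) True" unfolding SD_def using W i d unfolding SD_def by auto
    thus ?thesis using v unfolding EInv_def by blast
  qed
qed



lemma card_Av_sum:
  assumes "Av \<subseteq> board n"
  shows "card Av = (\<Sum>j<n. card (Av \<inter> box j))"
proof -
  have "Av = (\<Union>j\<in>{..<n}. Av \<inter> box j)" using assms by (auto simp: board_def)
  hence "card Av = card (\<Union>j\<in>{..<n}. Av \<inter> box j)" by simp
  also have "\<dots> = (\<Sum>j<n. card (Av \<inter> box j))"
    by (rule card_UN_disjoint) (auto simp: finite_box in_box)
  finally show ?thesis .
qed

lemma card_board: "card (board n) = 4 * n"
proof -
  have "card (board n) = (\<Sum>j<n. card (board n \<inter> box j))" by (rule card_Av_sum) simp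
  also have "\<dots> = (\<Sum>j<n. 4)"
  proof (rule sum.cong)
    fix j assume "j \<in> {..<n}"
    hence "board n \<inter> box j = box j" by (auto simp: board_def)
    thus "card (board n \<inter> box j) = 4" by (simp add: card_box)
  qed simp
  finally show ?thesis by simp
qed

lemma pigeon:
  assumes "Av \<subseteq> board n" "card Av = 2 * n" "i < n" "card (Av \<inter> box i) \<le> 1"
  shows "\<exists>j<n. 3 \<le> card (Av \<inter> box j)"
proof (rule ccontr)
  assume "\<not> ?thesis"
  hence le: "\<And>j. j < n \<Longrightarrow> card (Av \<inter> box j) \<le> 2" by force
  let ?f = "\<lambda>j. card (Av \<inter> box j)"
  have "card Av = ?f i + (\<Sum>j\<in>{..<n} - {i}. ?f j)"
    using card_Av_sum[OF assms(1)] sum.remove[of "{..<n}" i ?f] assms(3) by simp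
  also have "(\<Sum>j\<in>{..<n} - {i}. ?f j) \<le> (\<Sum>j\<in>{..<n} - {i}. 2)"
    by (rule sum_mono) (use le in auto)
  also have "(\<Sum>j\<in>{..<n} - {i}. (2::nat)) = 2 * (n - 1)" using assms(3) by simp
  finally have "card Av \<le> 1 + 2 * (n - 1)" using assms(4) by linarith
  thus False using assms(2,3) by linarith
qed

lemma SD_final:
  assumes "SD n Av En t" "board n \<subseteq> Av \<union> En"
  shows "\<exists>f\<in>losing_sets n phi. f \<subseteq> Av"
proof -
  have W: "Av \<union> En \<subseteq> board n" "Av \<inter> En = {}" using assms(1) unfolding SD_def Wf_def by blast+
  have fin: "finite Av" "finite En" using finite_sets assms(1) unfolding SD_def by blast+
  have "card (Av \<union> En) = card Av + card En" using W(2) fin by (simp add: card_Un_disjoint)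
  moreover have "Av \<union> En = board n" using W assms(2) by blast
  ultimately have tot: "card Av + card En = 4 * n" by (simp add: card_board)
  have cA: "card Av = 2 * n"
  proof (cases t)
    case True thus ?thesis using assms(1) tot unfolding SD_def by simp
  next
    case False thus ?thesis using assms(1) tot unfolding SD_def by simp
  qed
  obtain i where i: "i < n" "3 \<le> card (En \<inter> box i)" using assms(1) unfolding SD_def by blast
  have "card ((Av \<inter> box i) \<union> (En \<inter> box i)) = card (Av \<inter> box i) + card (En \<inter> box i)"
    using W(2) by (intro card_Un_disjoint) (auto simp: finite_box)
  moreover have "card ((Av \<inter> box i) \<union> (En \<inter> box i)) \<le> card (box i)"
    by (rule card_mono) (auto simp: finite_box)
  ultimately have "card (Av \<inter> box i) \<le> 1" using i(2) by (simp add: card_box)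
  then obtain j where j: "j < n" "3 \<le> card (Av \<inter> box j)" using pigeon[OF _ cA i(1)] W(1) by blast
  then obtain B where B: "B \<subseteq> Av \<inter> box j" "card B = 3" by (meson obtain_subset_with_card_n)
  have "B \<in> losing_sets n phi" unfolding losing_sets_def using B j by blast
  thus ?thesis using B by blast
qed

lemma SP_final:
  assumes "SP n Av En" "board n \<subseteq> Av \<union> En" "\<forall>\<sigma>. \<exists>c\<in>set phi. \<not> clause_sat \<sigma> c" "wf_3sat n phi"
  shows "\<exists>f\<in>losing_sets n phi. f \<subseteq> Av"
proof -
  have gd: "\<And>j. j < n \<Longrightarrow> good Av En j"
  proof -
    fix j assume j: "j < n"
    have "box j \<subseteq> board n" using j by (auto simp: board_def)
    hence "box j \<subseteq> Av \<union> En" using assms(2) by blast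
    moreover have "box j \<noteq> {}" by (simp add: box_def)
    ultimately show "good Av En j" using assms(1) j unfolding SP_def clean_def by blast
  qed
  obtain c where c: "c \<in> set phi" "\<not> clause_sat (\<lambda>j. Pos j \<in> Av) c" using assms(3) by blast
  obtain i bi j bj k bk where cc: "c = ((i,bi),(j,bj),(k,bk))" by (metis prod.exhaust)
  have ijk: "i < n" "j < n" "k < n" using assms(4) c(1) unfolding wf_3sat_def cc by fastforce+
  have "clause_set c \<subseteq> Av" using c(2) gd[OF ijk(1)] gd[OF ijk(2)] gd[OF ijk(3)]
    unfolding cc good_def by auto
  moreover have "clause_set c \<in> losing_sets n phi" using c(1) unfolding losing_sets_def by blast
  ultimately show ?thesis by blast
qed

lemma term_E:
  assumes "EInv n Av En t" "\<not> (\<exists>v\<in>board n - (Av \<union> En). restricted (Av \<union> En) v)"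
    "\<forall>\<sigma>. \<exists>c\<in>set phi. \<not> clause_sat \<sigma> c" "wf_3sat n phi"
  shows "\<exists>f\<in>losing_sets n phi. f \<subseteq> Av"
proof -
  have full: "board n \<subseteq> Av \<union> En" using restricted_exists assms(2) by blast
  have nf: "\<And>i x. i < n \<Longrightarrow> idx x = i \<Longrightarrow> x \<notin> Av \<union> En \<Longrightarrow> False"
    using full by (auto simp: in_board)
  consider (p) "SP n Av En" | (d) "SD n Av En t" | (r1) i w where "SR1 n Av En i w"
    | (r3) i where "SR3 n Av En i" | (r2) i c where "SR2 n Av En i c"
    | (q1) i where "SQ1 n Av En i" | (q2) i c where "SQ2 n Av En i c" | (q3) i where "SQ3 n Av En i"
    using assms(1) unfolding EInv_def by blast
  thus ?thesis
  proof cases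
    case p thus ?thesis using SP_final full assms(3,4) by blast
  next
    case d thus ?thesis using SD_final full by blast
  next
    case r1
    have "i < n" "box i \<inter> (Av \<union> En) = {A i, w}" using r1 unfolding SR1_def by blast+
    moreover have "S i \<noteq> A i" "Pos i \<noteq> A i" "S i \<noteq> Pos i" by simp_all
    ultimately have "S i \<notin> Av \<union> En \<or> Pos i \<notin> Av \<union> En"
    proof -
      have sb: "S i \<in> box i" "Pos i \<in> box i" by (auto simp: box_def)
      { assume "S i \<in> Av \<union> En" "Pos i \<in> Av \<union> En"
        hence "S i \<in> {A i, w}" "Pos i \<in> {A i, w}" using sb \<open>box i \<inter> (Av \<union> En) = {A i, w}\<close> by blast+
        hence False by auto }
      thus ?thesis by blast
    qed
    thus ?thesis using nf[of i "S i"] nf[of i "Pos i"] \<open>i < n\<close> by auto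
  next
    case r3
    hence "i < n" "Pos i \<notin> Av \<union> En" unfolding SR3_def by (auto simp: box_def)
    thus ?thesis using nf[of i "Pos i"] by auto
  next
    case r2
    hence "i < n" "idx c = i" "c \<notin> Av \<union> En" unfolding SR2_def by blast+
    thus ?thesis using nf by blast
  next
    case q1
    hence "i < n" "Pos i \<notin> Av \<union> En" unfolding SQ1_def by (auto simp: box_def)
    thus ?thesis using nf[of i "Pos i"] by auto
  next
    case q2
    hence "i < n" "c \<in> box i - (Av \<union> En)" unfolding SQ2_def by blast+
    thus ?thesis using nf[of i c] by (auto simp: in_box)
  next
    case q3
    hence "i < n" "S i \<notin> Av \<union> En" unfolding SQ3_def by (auto simp: box_def)
    thus ?thesis using nf[of i "S i"] by auto
  qed
qed

lemma enforcer_side: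
  assumes H1: "\<And>C v. restricted C v \<Longrightarrow> legal C v"
    and unsat: "\<forall>\<sigma>. \<exists>c\<in>set phi. \<not> clause_sat \<sigma> c" and wf: "wf_3sat n phi"
  shows "avoider_wins legal (board n) (losing_sets n phi) Av En t \<Longrightarrow> EInv n Av En t \<Longrightarrow> False"
proof (induction rule: avoider_wins.induct)
  case (terminal Av En t)
  have "\<not> (\<exists>v\<in>board n - (Av \<union> En). restricted (Av \<union> En) v)" using terminal(1) H1 by blast
  thus False using term_E[OF terminal(3) _ unsat wf] terminal(2) by blast
next
  case (avoider_move v Av En)
  show False by (rule avoider_move(4)) (rule A_step[OF avoider_move(5) avoider_move(1)])
next
  case (enforcer_move Av En)
  have "\<not> board n \<subseteq> Av \<union> En" using enforcer_move(1) by blast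
  then obtain v where v: "v \<in> board n - (Av \<union> En)" "restricted (Av \<union> En) v" "EInv n Av (insert v En) True"
    using E_step[OF enforcer_move(3)] by blast
  thus False using enforcer_move(2) H1 by blast
qed


lemma characterisation:
  assumes L: "legal = restricted \<or> legal = unrestricted" and wf: "wf_3sat n phi"
  shows "avoider_wins_enforcer_first legal (board n) (losing_sets n phi) \<longleftrightarrow>
         (\<exists>\<sigma>. \<forall>c\<in>set phi. clause_sat \<sigma> c)"
proof
  assume "\<exists>\<sigma>. \<forall>c\<in>set phi. clause_sat \<sigma> c"
  then obtain \<sigma> where sat: "\<forall>c\<in>set phi. clause_sat \<sigma> c" by blast
  have "IA \<sigma> n {} {}" by (simp add: IA_def)
  thus "avoider_wins_enforcer_first legal (board n) (losing_sets n phi)"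
    unfolding avoider_wins_enforcer_first_def by (rule avoider_side[OF L sat])
next
  assume w: "avoider_wins_enforcer_first legal (board n) (losing_sets n phi)"
  show "\<exists>\<sigma>. \<forall>c\<in>set phi. clause_sat \<sigma> c"
  proof (rule ccontr)
    assume "\<not> ?thesis"
    hence unsat: "\<forall>\<sigma>. \<exists>c\<in>set phi. \<not> clause_sat \<sigma> c" by blast
    have H1: "\<And>C v. restricted C v \<Longrightarrow> legal C v" using L by (auto simp: unrestricted_def)
    have "SP n {} {}" by (simp add: SP_def Wf_def clean_def)
    hence "EInv n {} {} False" by (simp add: EInv_def)
    have w': "avoider_wins legal (board n) (losing_sets n phi) {} {} False"
      using w unfolding avoider_wins_enforcer_first_def .
    show False by (rule enforcer_side[where legal=legal, OF H1 unsat wf w' \<open>EInv n {} {} False\<close>])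
  qed
qed

theorem lemma4:
  fixes n :: nat and phi :: "clause list"
  assumes "wf_3sat n phi"
  shows "avoider_wins_enforcer_first restricted (board n) (losing_sets n phi)
     \<longleftrightarrow> avoider_wins_enforcer_first unrestricted (board n) (losing_sets n phi)"
  using characterisation[of restricted n phi] characterisation[of unrestricted n phi] assms by simp

end
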